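(* Let $A=\{z\in\mathbb{C}:\operatorname{Re}z>0\}$ and let $P,Q,Q_1$ be polynomials in one complex variable, with $P$ not vanishing on $A$. If $Q(w)+P(w)vQ_1(w)\ne0$ for all $v,w\in A$, then either $S(z)=Q(z)+P(z)Q_1'(z)\ne0$ for all $z\in A$, or $S\equiv0$. *)

theory Defs
  imports Complex_Main "HOL-Computational_Algebra.Polynomial"
begin

definition right_half_plane :: "complex set" where
  "right_half_plane = {z. Re z > 0}"

end

theory Submission
  imports Defs "HOL-Complex_Analysis.Complex_Analysis"
    "HOL-Computational_Algebra.Fundamental_Theorem_Algebra"
begin

lemma om_lemma:
  fixes f :: "complex \<Rightarrow> complex"
  assumes hol: "f holomorphic_on ball z r" and r: "r > 0" and fz: "f z = 0"
    and re: "\<forall>w\<in>ball z r. Re (f w) \<ge> 0"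
  shows "\<forall>w\<in>ball z r. f w = 0"
proof (cases "f constant_on ball z r")
  case True
  then obtain c where c: "\<forall>x\<in>ball z r. f x = c" unfolding constant_on_def by blast
  have "c = 0" using c fz r by (metis centre_in_ball)
  then show ?thesis using c by simp
next
  case False
  have "open (f ` ball z r)"
    by (rule open_mapping_thm[OF hol]) (use False in auto)
  moreover have "0 \<in> f ` ball z r" using fz r by (metis centre_in_ball image_eqI)
  ultimately obtain e where e: "e > 0" "ball 0 e \<subseteq> f ` ball z r"
    by (meson open_contains_ball)
  have "complex_of_real (- e/2) \<in> ball 0 e" using e by simp
  then have "complex_of_real (- e/2) \<in> f ` ball z r" using e(2) by (rule subsetD[rotated])
  then obtain w where w: "w \<in> ball z r" "f w = complex_of_real (- e/2)" by (rule imageE) simp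
  have "Re (f w) = - e/2" using w(2) by simp
  then have False using re w(1) e(1) by force
  then show ?thesis ..
qed

lemma poly_zero_on_ball:
  fixes p :: "complex poly"
  assumes "r > 0" "\<forall>w\<in>ball z r. poly p w = 0"
  shows "p = 0"
proof (rule ccontr)
  assume "p \<noteq> 0"
  then have "finite {x. poly p x = 0}" by (rule poly_roots_finite)
  then have "finite (ball z r)" using assms(2) by (metis (mono_tags, lifting) finite_subset mem_Collect_eq subsetI)
  then have "ball z r = {}" using finite_imp_not_open by blast
  then show False using assms(1) by (metis centre_in_ball empty_iff)
qed

lemma logderiv:
  fixes p :: "complex poly"
  assumes "\<forall>w\<in>right_half_plane. poly p w \<noteq> 0" "Re z > 0"
  shows "Re (poly (pderiv p) z / poly p z) \<ge> 0 \<and>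
         (degree p > 0 \<longrightarrow> Re (poly (pderiv p) z / poly p z) > 0)"
  using assms(1)
proof (induction "degree p" arbitrary: p rule: less_induct)
  case less
  show ?case
  proof (cases "degree p = 0")
    case True
    then have "pderiv p = 0" using pderiv_eq_0_iff by blast
    then show ?thesis using True by simp
  next
    case False
    then obtain r where r: "poly p r = 0"
      by (metis Fundamental_Theorem_Algebra.fundamental_theorem_of_algebra constant_degree)
    then have "[:-r,1:] dvd p" using poly_eq_0_iff_dvd by blast
    then obtain q where q: "p = [:-r,1:] * q" by (elim dvdE)
    have rA: "r \<notin> right_half_plane" using less.prems r by blast
    then have rre: "Re r \<le> 0" unfolding right_half_plane_def by simp
    have p0: "p \<noteq> 0" using False by auto
    then have q0: "q \<noteq> 0" using q by auto
    have "degree p = degree [:-r,1:] + degree q"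
      using q q0 by (metis degree_mult_eq pCons_eq_0_iff one_neq_zero)
    then have dq: "degree q < degree p" by simp
    have qA: "\<forall>w\<in>right_half_plane. poly q w \<noteq> 0" using less.prems q by auto
    have IH: "Re (poly (pderiv q) z / poly q z) \<ge> 0"
      using less.hyps[OF dq qA] by blast
    have zr: "z - r \<noteq> 0" using assms(2) rre by (metis diff_eq_eq less_le_not_le add_0 Re_complex_of_real)
    have qz: "poly q z \<noteq> 0" using qA assms(2) unfolding right_half_plane_def by simp
    have pd0: "pderiv p = [:-r,1:] * pderiv q + q * pderiv [:-r,1:]"
      by (simp only: q pderiv_mult)
    have "pderiv [:-r,1:] = 1" by (simp add: pderiv_pCons one_pCons)
    then have pd: "pderiv p = [:-r,1:] * pderiv q + q" using pd0 by simp
    have eq: "poly (pderiv p) z / poly p z = poly (pderiv q) z / poly q z + 1 / (z - r)"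
    proof -
      have a: "poly (pderiv p) z = (z - r) * poly (pderiv q) z + poly q z" by (simp add: pd algebra_simps)
      have b: "poly p z = (z - r) * poly q z" by (simp add: q algebra_simps)
      show ?thesis unfolding a b using zr qz by (simp add: field_simps)
    qed
    have r1: "Re (1 / (z - r)) = Re (z - r) / (cmod (z - r))^2"
      by (simp add: Re_divide cmod_power2)
    have r2: "Re (z - r) > 0" using assms(2) rre by simp
    have r3: "(cmod (z - r))^2 > 0" using zr by simp
    have "Re (1 / (z - r)) > 0" unfolding r1 using r2 r3 by (rule divide_pos_pos)
    then show ?thesis using eq IH by simp
  qed
qed


theorem lemma2p3:
  fixes P Q Q1 :: "complex poly"
  assumes "\<forall>z\<in>right_half_plane. poly P z \<noteq> 0"
    and "\<forall>v\<in>right_half_plane. \<forall>w\<in>right_half_plane.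
           poly Q w + poly P w * v * poly Q1 w \<noteq> 0"
  shows "(\<forall>z\<in>right_half_plane. poly (Q + P * pderiv Q1) z \<noteq> 0)
         \<or> Q + P * pderiv Q1 = 0"
proof -
  note PA = assms(1) and H = assms(2)
  have oneA: "(1::complex) \<in> right_half_plane" unfolding right_half_plane_def by simp
  have Q1A: "Q1 = 0 \<or> (\<forall>w\<in>right_half_plane. poly Q1 w \<noteq> 0)"
  proof (rule ccontr)
    assume "\<not> ?thesis"
    then obtain z where Q1n: "Q1 \<noteq> 0" and zA: "z \<in> right_half_plane" and Q1z: "poly Q1 z = 0" by blast
    have Qz: "poly Q z \<noteq> 0" using H oneA zA Q1z by fastforce
    have "open (right_half_plane \<inter> {w. poly Q w \<noteq> 0})"
      unfolding right_half_plane_def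
      by (intro open_Int open_halfspace_Re_gt open_Collect_neq continuous_intros)
    moreover have "z \<in> right_half_plane \<inter> {w. poly Q w \<noteq> 0}" using zA Qz by simp
    ultimately obtain r where r: "r > 0" "ball z r \<subseteq> right_half_plane \<inter> {w. poly Q w \<noteq> 0}"
      by (meson open_contains_ball)
    define f where "f = (\<lambda>w. poly P w * poly Q1 w / poly Q w)"
    have hol: "f holomorphic_on ball z r" unfolding f_def
      using r by (intro holomorphic_intros) auto
    have re: "\<forall>w\<in>ball z r. Re (f w) \<ge> 0"
    proof
      fix w assume w: "w \<in> ball z r"
      then have wA: "w \<in> right_half_plane" and Qw: "poly Q w \<noteq> 0" using r by auto
      show "Re (f w) \<ge> 0"
      proof (rule ccontr)
        assume neg: "\<not> Re (f w) \<ge> 0"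
        then have fw: "f w \<noteq> 0" by auto
        define v where "v = - 1 / f w"
        have "Re v = - Re (f w) / (cmod (f w))^2" unfolding v_def
          by (simp add: Re_divide cmod_power2)
        moreover have "(cmod (f w))^2 > 0" using fw by simp
        moreover have "Re (f w) < 0" using neg by simp
        ultimately have "Re v > 0" by (simp add: divide_neg_pos)
        then have vA: "v \<in> right_half_plane" unfolding right_half_plane_def by simp
        have "poly Q w + poly P w * v * poly Q1 w = 0"
          using Qw fw unfolding v_def f_def by (simp add: field_simps)
        then show False using H vA wA by blast
      qed
    qed
    have fz: "f z = 0" unfolding f_def using Q1z by simp
    have "\<forall>w\<in>ball z r. f w = 0" using om_lemma[OF hol r(1) fz re] .
    then have "\<forall>w\<in>ball z r. poly Q1 w = 0" using r PA unfolding f_def by auto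
    then have "Q1 = 0" using poly_zero_on_ball r(1) by blast
    then show False using Q1n by simp
  qed
  show ?thesis
  proof (cases "Q1 = 0")
    case True
    then show ?thesis using H oneA by auto
  next
    case False
    then have Q1A: "\<forall>w\<in>right_half_plane. poly Q1 w \<noteq> 0" using Q1A by blast
    show ?thesis
    proof (rule ccontr)
      assume "\<not> ?thesis"
      then obtain z where zA: "z \<in> right_half_plane" and Sz: "poly (Q + P * pderiv Q1) z = 0"
        and Sn: "Q + P * pderiv Q1 \<noteq> 0" by blast
      have zre: "Re z > 0" using zA unfolding right_half_plane_def by simp
      define g where "g = (\<lambda>w. poly Q w / (poly P w * poly Q1 w))"
      have gre: "\<forall>w\<in>right_half_plane. Re (g w) \<ge> 0"
      proof
        fix w assume wA: "w \<in> right_half_plane"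
        have nz: "poly P w \<noteq> 0" "poly Q1 w \<noteq> 0" using PA Q1A wA by auto
        show "Re (g w) \<ge> 0"
        proof (rule ccontr)
          assume "\<not> Re (g w) \<ge> 0"
          then have vA: "- g w \<in> right_half_plane" unfolding right_half_plane_def by simp
          have "poly Q w + poly P w * (- g w) * poly Q1 w = 0"
            using nz unfolding g_def by (simp add: field_simps)
          then show False using H vA wA by blast
        qed
      qed
      have LD: "Re (poly (pderiv Q1) z / poly Q1 z) \<ge> 0 \<and>
         (degree Q1 > 0 \<longrightarrow> Re (poly (pderiv Q1) z / poly Q1 z) > 0)"
        using logderiv[OF Q1A zre] .
      have Pz: "poly P z \<noteq> 0" and Q1z: "poly Q1 z \<noteq> 0" using PA Q1A zA by auto
      have Qeq: "poly Q z = - poly P z * poly (pderiv Q1) z" using Sz by (simp add: eq_neg_iff_add_eq_0)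
      show False
      proof (cases "poly Q z = 0")
        case False
        have "g z = - (poly (pderiv Q1) z / poly Q1 z)"
          unfolding g_def using Qeq Pz Q1z by (simp add: field_simps)
        then have "Re (poly (pderiv Q1) z / poly Q1 z) \<le> 0" using gre zA by fastforce
        then have "degree Q1 = 0" using LD by auto
        then have "pderiv Q1 = 0" using pderiv_eq_0_iff by blast
        then show False using Qeq False by simp
      next
        case True
        then have "poly (pderiv Q1) z = 0" using Qeq Pz by simp
        then have "degree Q1 = 0" using LD by auto
        then have dQ1: "pderiv Q1 = 0" using pderiv_eq_0_iff by blast
        have r: "Re z > 0" "ball z (Re z) \<subseteq> right_half_plane"
        proof -
          have "Re w > 0" if "w \<in> ball z (Re z)" for w
          proof -
            have "cmod (z - w) < Re z" using that by (simp add: dist_complex_def)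
            moreover have "\<bar>Re (z - w)\<bar> \<le> cmod (z - w)" by (rule abs_Re_le_cmod)
            ultimately show ?thesis by simp
          qed
          then show "Re z > 0" "ball z (Re z) \<subseteq> right_half_plane"
            using zre unfolding right_half_plane_def by auto
        qed
        have hol: "g holomorphic_on ball z (Re z)" unfolding g_def
          using r PA Q1A by (intro holomorphic_intros) auto
        have "\<forall>w\<in>ball z (Re z). g w = 0"
          using om_lemma[OF hol r(1)] True gre r(2) unfolding g_def by auto
        then have "\<forall>w\<in>ball z (Re z). poly Q w = 0" using r(2) PA Q1A unfolding g_def by auto
        then have "Q = 0" using poly_zero_on_ball r(1) by blast
        then show False using Sn dQ1 by simp
      qed
    qed
  qed
qed

end
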